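(* Let $P$ be the feasible set of the rational mixed-integer program $\min\{c^Tx : Ax\le b,\ \ell\le x\le u,\ x_j\in\mathbb{Z} \text{ for all } j\in I\}$, where $A\in\mathbb{Q}^{m\times n}$, $c\in\mathbb{Q}^n$, $b\in\mathbb{Q}^m$, $\ell,u\in(\mathbb{Q}\cup\{\pm\infty\})^n$, $I\subseteq\{1,\dots,n\}$. Let $a^Tx\le \beta$ and $g^Tx\le d$ be two valid, $\mathbb{F}$-representable inequalities for $P$, and let $\lambda\in\mathbb{F}$ with $\lambda>0$. Set $\alpha_i:=a_i+\lambda g_i$ for $i=1,\dots,n$, and let $U,L\subseteq\{1,\dots,n\}$ be disjoint index sets such that $u_i<\infty$ for all $i\in U$, $\ell_i>-\infty$ for all $i\in L$, and $\alpha_i=0$ for all $i\notin U\cup L$. Then the inequality $$\sum_{i\in U}\overline{\alpha_i}\,x_i+\sum_{i\in L}\underline{\alpha_i}\,x_i\;\le\;\overline{\beta+\lambda d+\sum_{i\in U,\,u_i>0}(\overline{\alpha_i}-\underline{\alpha_i})\,u_i+\sum_{i\in L,\,\ell_i<0}(\underline{\alpha_i}-\overline{\alpha_i})\,\ell_i}$$ is an $\mathbb{F}$-representable inequality valid for $P$ (a valid approximation of the aggregated inequality $(a+\lambda g)^Tx\le \beta+\lambda d$).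
   Context: An inequality is valid for $P$ if every point of $P$ satisfies it. $\mathbb{F}\subseteq\mathbb{Q}$ denotes a fixed set of floating-point numbers (e.g. IEEE double-precision numbers). For $x\in\mathbb{Q}$, $\overline{x}:=\min\{y\in\mathbb{F}: y>x\}$ and $\underline{x}:=\max\{y\in\mathbb{F}: y<x\}$ (assumed to exist for all numbers occurring). An inequality $a^Tx\le\beta$ is $\mathbb{F}$-representable if $a\in\mathbb{F}^n$ and $\beta\in\mathbb{F}$. *)

theory Defs
  imports Complex_Main "HOL-Library.Extended"
begin

(* Extended rationals Q \<union> {+\<infinity>,-\<infinity>} are modelled by rat extended
   (Fin r | Pinf | Minf, ordered Minf < Fin r < Pinf). *)

fun fin_val :: "rat extended \<Rightarrow> rat" where
  "fin_val (Fin r) = r"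
| "fin_val Pinf = 0"
| "fin_val Minf = 0"

definition mip_feasible ::
  "nat \<Rightarrow> nat \<Rightarrow> (nat \<Rightarrow> nat \<Rightarrow> rat) \<Rightarrow> (nat \<Rightarrow> rat) \<Rightarrow> (nat \<Rightarrow> rat extended)
   \<Rightarrow> (nat \<Rightarrow> rat extended) \<Rightarrow> nat set \<Rightarrow> (nat \<Rightarrow> rat) set" where
  "mip_feasible m n A b l u I =
     {x. (\<forall>k\<in>{1..m}. (\<Sum>j=1..n. A k j * x j) \<le> b k)
       \<and> (\<forall>j\<in>{1..n}. l j \<le> Fin (x j) \<and> Fin (x j) \<le> u j)
       \<and> (\<forall>j\<in>I. x j \<in> \<int>)}"

definition valid_ineq :: "nat \<Rightarrow> (nat \<Rightarrow> rat) set \<Rightarrow> (nat \<Rightarrow> rat) \<Rightarrow> rat \<Rightarrow> bool" where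
  "valid_ineq n P a \<beta> \<longleftrightarrow> (\<forall>x\<in>P. (\<Sum>i=1..n. a i * x i) \<le> \<beta>)"

definition F_representable :: "rat set \<Rightarrow> nat \<Rightarrow> (nat \<Rightarrow> rat) \<Rightarrow> rat \<Rightarrow> bool" where
  "F_representable F n a \<beta> \<longleftrightarrow> (\<forall>i\<in>{1..n}. a i \<in> F) \<and> \<beta> \<in> F"

(* overline x = min{y \<in> F. y > x},  underline x = max{y \<in> F. y < x} *)
definition has_fl_up :: "rat set \<Rightarrow> rat \<Rightarrow> bool" where
  "has_fl_up F x \<longleftrightarrow> (\<exists>y. y \<in> F \<and> x < y \<and> (\<forall>z\<in>F. x < z \<longrightarrow> y \<le> z))"

definition has_fl_down :: "rat set \<Rightarrow> rat \<Rightarrow> bool" where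
  "has_fl_down F x \<longleftrightarrow> (\<exists>y. y \<in> F \<and> y < x \<and> (\<forall>z\<in>F. z < x \<longrightarrow> z \<le> y))"

definition fl_up :: "rat set \<Rightarrow> rat \<Rightarrow> rat" where
  "fl_up F x = (THE y. y \<in> F \<and> x < y \<and> (\<forall>z\<in>F. x < z \<longrightarrow> y \<le> z))"

definition fl_down :: "rat set \<Rightarrow> rat \<Rightarrow> rat" where
  "fl_down F x = (THE y. y \<in> F \<and> y < x \<and> (\<forall>z\<in>F. z < x \<longrightarrow> z \<le> y))"

end

theory Submission
  imports Defs
begin


lemma fl_up_prop:
  assumes "has_fl_up F x" shows "fl_up F x \<in> F \<and> x < fl_up F x"
proof -
  obtain y where y: "y \<in> F \<and> x < y \<and> (\<forall>z\<in>F. x < z \<longrightarrow> y \<le> z)"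
    using assms unfolding has_fl_up_def by blast
  have "(THE y. y \<in> F \<and> x < y \<and> (\<forall>z\<in>F. x < z \<longrightarrow> y \<le> z)) = y"
    by (rule the_equality) (use y in \<open>auto intro: order.antisym\<close>)
  thus ?thesis using y unfolding fl_up_def by simp
qed

lemma fl_down_prop:
  assumes "has_fl_down F x" shows "fl_down F x \<in> F \<and> fl_down F x < x"
proof -
  obtain y where y: "y \<in> F \<and> y < x \<and> (\<forall>z\<in>F. z < x \<longrightarrow> z \<le> y)"
    using assms unfolding has_fl_down_def by blast
  have "(THE y. y \<in> F \<and> y < x \<and> (\<forall>z\<in>F. z < x \<longrightarrow> z \<le> y)) = y"
    by (rule the_equality) (use y in \<open>auto intro: order.antisym\<close>)
  thus ?thesis using y unfolding fl_down_def by simp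
qed

lemma up_bound:
  fixes al up dn x r :: rat
  assumes "dn < al" "al < up" "x \<le> r"
  shows "up * x - al * x \<le> (if r > 0 then (up - dn) * r else 0)"
proof -
  have a: "(up - al) * x \<le> (up - al) * r" using assms by (intro mult_left_mono) auto
  show ?thesis
  proof (cases "r > 0")
    case True
    have "(up - al) * r \<le> (up - dn) * r" using assms True by (intro mult_right_mono) auto
    hence "(up - al) * x \<le> (up - dn) * r" using a by linarith
    hence "up * x - al * x \<le> (up - dn) * r" by (simp only: left_diff_distrib)
    thus ?thesis using True by simp
  next
    case False
    have "(up - al) * r \<le> 0" using assms False by (simp add: mult_nonneg_nonpos)
    thus ?thesis using a False by (simp add: left_diff_distrib)
  qed
qed

lemma down_bound:
  fixes al up dn x r :: rat
  assumes "dn < al" "al < up" "r \<le> x"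
  shows "dn * x - al * x \<le> (if r < 0 then (dn - up) * r else 0)"
proof -
  have a: "(al - dn) * r \<le> (al - dn) * x" using assms by (intro mult_left_mono) auto
  show ?thesis
  proof (cases "r < 0")
    case True
    have "(up - dn) * r \<le> (al - dn) * r" using assms True by (intro mult_right_mono_neg) auto
    hence "(dn - al) * x \<le> (dn - up) * r" using a by (simp add: algebra_simps)
    hence "dn * x - al * x \<le> (dn - up) * r" by (simp only: left_diff_distrib)
    thus ?thesis using True by simp
  next
    case False
    have "0 \<le> (al - dn) * r" using assms False by simp
    thus ?thesis using a False by (simp add: left_diff_distrib)
  qed
qed

lemma sum_if_sub:
  fixes f :: "nat \<Rightarrow> rat"
  assumes "B \<subseteq> A" "finite A"
  shows "(\<Sum>i\<in>A. if i \<in> B then f i else 0) = sum f B"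
proof -
  have "(\<Sum>i\<in>A. if i \<in> B then f i else 0) = sum f (A \<inter> B)"
    by (rule sum.inter_restrict[symmetric]) (rule assms(2))
  also have "A \<inter> B = B" using assms by blast
  finally show ?thesis .
qed
lemma sum_split_UL:
  fixes f h :: "nat \<Rightarrow> rat" and U L :: "nat set" and P Q :: "nat \<Rightarrow> bool"
  assumes "U \<subseteq> {1..n}" "L \<subseteq> {1..n}"
  shows "(\<Sum>i=1..n. (if i \<in> U \<and> P i then f i else 0) + (if i \<in> L \<and> Q i then h i else 0))
      = (\<Sum>i\<in>{i\<in>U. P i}. f i) + (\<Sum>i\<in>{i\<in>L. Q i}. h i)"
proof -
  have "(\<Sum>i=1..n. (if i \<in> U \<and> P i then f i else 0) + (if i \<in> L \<and> Q i then h i else 0))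
    = (\<Sum>i=1..n. (if i \<in> {i\<in>U. P i} then f i else 0) + (if i \<in> {i\<in>L. Q i} then h i else 0))"
    by simp
  also have "\<dots> = (\<Sum>i=1..n. (if i \<in> {i\<in>U. P i} then f i else 0)) + (\<Sum>i=1..n. (if i \<in> {i\<in>L. Q i} then h i else 0))"
    by (rule sum.distrib)
  also have "\<dots> = (\<Sum>i\<in>{i\<in>U. P i}. f i) + (\<Sum>i\<in>{i\<in>L. Q i}. h i)"
  proof -
    have "(\<Sum>i=1..n. (if i \<in> {i\<in>U. P i} then f i else 0)) = (\<Sum>i\<in>{i\<in>U. P i}. f i)"
      by (rule sum_if_sub) (use assms in auto)
    moreover have "(\<Sum>i=1..n. (if i \<in> {i\<in>L. Q i} then h i else 0)) = (\<Sum>i\<in>{i\<in>L. Q i}. h i)"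
      by (rule sum_if_sub) (use assms in auto)
    ultimately show ?thesis by simp
  qed
  finally show ?thesis .
qed

theorem corollary1:
  fixes F :: "rat set" and m n :: nat
    and A :: "nat \<Rightarrow> nat \<Rightarrow> rat" and b :: "nat \<Rightarrow> rat"
    and l u :: "nat \<Rightarrow> rat extended" and I U L :: "nat set"
    and a g :: "nat \<Rightarrow> rat" and \<beta> d lam :: rat
  assumes F0: "0 \<in> F"
    and I: "I \<subseteq> {1..n}"
    and va: "valid_ineq n (mip_feasible m n A b l u I) a \<beta>"
    and ra: "F_representable F n a \<beta>"
    and vg: "valid_ineq n (mip_feasible m n A b l u I) g d"
    and rg: "F_representable F n g d"
    and lam: "lam \<in> F" "lam > 0"
    and UL: "U \<subseteq> {1..n}" "L \<subseteq> {1..n}" "U \<inter> L = {}"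
    and Ufin: "\<forall>i\<in>U. u i < Pinf"
    and Lfin: "\<forall>i\<in>L. l i > Minf"
    and zero: "\<forall>i\<in>{1..n} - (U \<union> L). a i + lam * g i = 0"
    and ex_round: "\<forall>i\<in>U \<union> L. has_fl_up F (a i + lam * g i) \<and> has_fl_down F (a i + lam * g i)"
    and ex_rhs: "has_fl_up F (\<beta> + lam * d
        + (\<Sum>i\<in>{i\<in>U. u i > Fin 0}.
             (fl_up F (a i + lam * g i) - fl_down F (a i + lam * g i)) * fin_val (u i))
        + (\<Sum>i\<in>{i\<in>L. l i < Fin 0}.
             (fl_down F (a i + lam * g i) - fl_up F (a i + lam * g i)) * fin_val (l i)))"
  shows "F_representable F n
           (\<lambda>i. if i \<in> U then fl_up F (a i + lam * g i)
                 else if i \<in> L then fl_down F (a i + lam * g i) else 0)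
           (fl_up F (\<beta> + lam * d
              + (\<Sum>i\<in>{i\<in>U. u i > Fin 0}.
                   (fl_up F (a i + lam * g i) - fl_down F (a i + lam * g i)) * fin_val (u i))
              + (\<Sum>i\<in>{i\<in>L. l i < Fin 0}.
                   (fl_down F (a i + lam * g i) - fl_up F (a i + lam * g i)) * fin_val (l i))))
       \<and> valid_ineq n (mip_feasible m n A b l u I)
           (\<lambda>i. if i \<in> U then fl_up F (a i + lam * g i)
                 else if i \<in> L then fl_down F (a i + lam * g i) else 0)
           (fl_up F (\<beta> + lam * d
              + (\<Sum>i\<in>{i\<in>U. u i > Fin 0}.
                   (fl_up F (a i + lam * g i) - fl_down F (a i + lam * g i)) * fin_val (u i))
              + (\<Sum>i\<in>{i\<in>L. l i < Fin 0}.
                   (fl_down F (a i + lam * g i) - fl_up F (a i + lam * g i)) * fin_val (l i))))"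
  proof -
  let ?al = "\<lambda>i. a i + lam * g i"
  let ?c = "\<lambda>i. if i \<in> U then fl_up F (?al i) else if i \<in> L then fl_down F (?al i) else 0"
  let ?S = "\<beta> + lam * d
        + (\<Sum>i\<in>{i\<in>U. u i > Fin 0}.
             (fl_up F (a i + lam * g i) - fl_down F (a i + lam * g i)) * fin_val (u i))
        + (\<Sum>i\<in>{i\<in>L. l i < Fin 0}.
             (fl_down F (a i + lam * g i) - fl_up F (a i + lam * g i)) * fin_val (l i))"
  have S: "fl_up F ?S \<in> F \<and> ?S < fl_up F ?S" using fl_up_prop[OF ex_rhs] .
  have up: "\<And>i. i \<in> U \<union> L \<Longrightarrow> fl_up F (?al i) \<in> F \<and> ?al i < fl_up F (?al i)"
    using ex_round fl_up_prop by blast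
  have dn: "\<And>i. i \<in> U \<union> L \<Longrightarrow> fl_down F (?al i) \<in> F \<and> fl_down F (?al i) < ?al i"
    using ex_round fl_down_prop by blast
  have rep: "F_representable F n ?c (fl_up F ?S)"
    unfolding F_representable_def using S up dn F0 by auto
  let ?t = "\<lambda>i. (if i \<in> U \<and> u i > Fin 0 then (fl_up F (?al i) - fl_down F (?al i)) * fin_val (u i) else 0)
     + (if i \<in> L \<and> l i < Fin 0 then (fl_down F (?al i) - fl_up F (?al i)) * fin_val (l i) else 0)"
  have sumt: "(\<Sum>i=1..n. ?t i) = (\<Sum>i\<in>{i\<in>U. u i > Fin 0}.
             (fl_up F (?al i) - fl_down F (?al i)) * fin_val (u i))
        + (\<Sum>i\<in>{i\<in>L. l i < Fin 0}.
             (fl_down F (?al i) - fl_up F (?al i)) * fin_val (l i))"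
    by (rule sum_split_UL[OF UL(1) UL(2)])
  have valid: "valid_ineq n (mip_feasible m n A b l u I) ?c (fl_up F ?S)"
    unfolding valid_ineq_def
  proof
    fix x assume xP: "x \<in> mip_feasible m n A b l u I"
    hence bnd: "\<And>j. j \<in> {1..n} \<Longrightarrow> l j \<le> Fin (x j) \<and> Fin (x j) \<le> u j"
      unfolding mip_feasible_def by auto
    have h1: "(\<Sum>i=1..n. a i * x i) \<le> \<beta>" using va xP unfolding valid_ineq_def by blast
    have h2: "(\<Sum>i=1..n. g i * x i) \<le> d" using vg xP unfolding valid_ineq_def by blast
    have "(\<Sum>i=1..n. ?al i * x i) = (\<Sum>i=1..n. a i * x i) + lam * (\<Sum>i=1..n. g i * x i)"
      by (simp add: algebra_simps sum.distrib sum_distrib_left)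
    also have "\<dots> \<le> \<beta> + lam * d"
    proof -
      have "lam * (\<Sum>i=1..n. g i * x i) \<le> lam * d" using h2 lam by (intro mult_left_mono) auto
      thus ?thesis using h1 by linarith
    qed
    finally have agg: "(\<Sum>i=1..n. ?al i * x i) \<le> \<beta> + lam * d" .
    have pt: "?c i * x i - ?al i * x i \<le> ?t i" if i: "i \<in> {1..n}" for i
    proof (cases "i \<in> U")
      case True
      have nl: "i \<notin> L" using True UL by auto
      have ufin: "u i < Pinf" using Ufin True by auto
      have xu: "Fin (x i) \<le> u i" using bnd i by auto
      then obtain r where r: "u i = Fin r" using ufin by (cases "u i") auto
      have "x i \<le> r" using xu r by simp
      moreover have "i \<in> U \<union> L" using True by simp
      ultimately have "?c i * x i - ?al i * x i \<le> (if r > 0 then (fl_up F (?al i) - fl_down F (?al i)) * r else 0)"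
        using up_bound[of "fl_down F (?al i)" "?al i" "fl_up F (?al i)" "x i" r] dn[of i] up[of i] True by simp
      then
      show ?thesis using nl r True by (cases "0 < r"; simp add: zero_extended_def)
    next
      case nU: False
      show ?thesis
      proof (cases "i \<in> L")
        case True
        have lfin: "l i > Minf" using Lfin True by auto
        have xl: "l i \<le> Fin (x i)" using bnd i by auto
        then obtain r where r: "l i = Fin r" using lfin by (cases "l i") auto
        have "r \<le> x i" using xl r by simp
        moreover have "i \<in> U \<union> L" using True by simp
        ultimately have "?c i * x i - ?al i * x i \<le> (if r < 0 then (fl_down F (?al i) - fl_up F (?al i)) * r else 0)"
          using down_bound[of "fl_down F (?al i)" "?al i" "fl_up F (?al i)" r "x i"] dn[of i] up[of i] True nU by simp
        then
        show ?thesis using nU r True by (cases "r < 0"; simp add: zero_extended_def)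
      next
        case False
        thus ?thesis using nU zero i by simp
      qed
    qed
    have "(\<Sum>i=1..n. ?c i * x i) = (\<Sum>i=1..n. ?al i * x i) + (\<Sum>i=1..n. ?c i * x i - ?al i * x i)"
      by (simp add: sum_subtractf)
    also have "\<dots> \<le> (\<beta> + lam * d) + (\<Sum>i=1..n. ?t i)"
    proof -
      have "(\<Sum>i=1..n. ?c i * x i - ?al i * x i) \<le> (\<Sum>i=1..n. ?t i)"
        by (rule sum_mono) (rule pt)
      thus ?thesis using agg by linarith
    qed
    also have "\<dots> = ?S" using sumt by simp
    also have "\<dots> \<le> fl_up F ?S" using S by simp
    finally show "(\<Sum>i=1..n. ?c i * x i) \<le> fl_up F ?S" .
  qed
  show ?thesis using rep valid by blast
qed

end
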